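(* Let $k\in\{2,\dots,N\}$ and suppose $J_k\le k-1$. Then for every $j$ with $J_k\le j\le k-1$, $$j\cdot h^+_{j+1,k}\ \ge\ \sum_{j'=1}^{j}h^+_{j',k}.$$
   Context: Fix $N\in\mathbb{N}$. A function $f:[0,1]\to\mathbb{R}$ is inverse S-shaped if it is strictly increasing, continuously differentiable, and there is $x_0\in[0,1]$ such that $f'$ is strictly decreasing on $[0,x_0]$ and strictly increasing on $[x_0,1]$. Let $W^+:[0,1]\to[0,1]$ be inverse S-shaped with $W^+(0)=0$, $W^+(1)=1$. For $k\in\{1,\dots,N\}$ and $j\in\{1,\dots,k\}$ let $h^+_{j,k}:=W^+\!\left(\frac{k-j+1}{N}\right)-W^+\!\left(\frac{k-j}{N}\right)$, and let $J_k:=\min\{j\in\{1,\dots,k\}: j\,h^+_{j+1,k}\ge\sum_{j'=1}^{j}h^+_{j',k}\}$ with $h^+_{k+1,k}:=\infty$. *)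

theory Defs
  imports "HOL-Analysis.Analysis"
begin

definition inverse_S_shaped :: "(real \<Rightarrow> real) \<Rightarrow> bool" where
  "inverse_S_shaped f \<longleftrightarrow>
     strict_mono_on {0..1} f \<and>
     (\<exists>f'. (\<forall>x\<in>{0..1}. (f has_real_derivative f' x) (at x within {0..1})) \<and>
           continuous_on {0..1} f' \<and>
           (\<exists>x0\<in>{0..1}. strict_antimono_on {0..x0} f' \<and> strict_mono_on {x0..1} f'))"

definition hplus :: "(real \<Rightarrow> real) \<Rightarrow> nat \<Rightarrow> nat \<Rightarrow> nat \<Rightarrow> real" where
  "hplus W N j k = W (real (k - j + 1) / real N) - W (real (k - j) / real N)"

text \<open>The defining condition of J_k; for j = k the convention h_{k+1,k} = \<infinity>
  makes it hold automatically.\<close>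
definition Jcond :: "(real \<Rightarrow> real) \<Rightarrow> nat \<Rightarrow> nat \<Rightarrow> nat \<Rightarrow> bool" where
  "Jcond W N k j \<longleftrightarrow>
     j = k \<or> real j * hplus W N (j + 1) k \<ge> (\<Sum>j'=1..j. hplus W N j' k)"

definition Jk :: "(real \<Rightarrow> real) \<Rightarrow> nat \<Rightarrow> nat \<Rightarrow> nat" where
  "Jk W N k = (LEAST j. j \<in> {1..k} \<and> Jcond W N k j)"

end

theory Submission imports Defs begin

lemma mvt_real:
  fixes D D' :: "real \<Rightarrow> real"
  assumes "a < b" "\<And>x. x \<in> {a..b} \<Longrightarrow> (D has_real_derivative D' x) (at x within {a..b})"
  shows "\<exists>z\<in>{a<..<b}. D b - D a = (b - a) * D' z"
proof -
  have "\<exists>z\<in>{a<..<b}. D b - D a = (\<lambda>h. D' z * h) (b - a)"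
    by (rule mvt_simple[OF assms(1)]) (use assms(2) in \<open>auto simp: has_field_derivative_def\<close>)
  thus ?thesis by (auto simp: mult.commute)
qed

lemma shift_deriv:
  fixes W f' :: "real \<Rightarrow> real"
  assumes der: "\<forall>x\<in>{0..1}. (W has_real_derivative f' x) (at x within {0..1})"
    and "0 \<le> a" "a + 2*d \<le> 1" "0 < d" "x \<in> {a..a+d}"
  shows "((\<lambda>x. W (x + d) - W x) has_real_derivative (f' (x+d) - f' x)) (at x within {a..a+d})"
proof -
  have sub1: "{a..a+d} \<subseteq> {0..1}" using assms by auto
  have sub2: "(\<lambda>x. x + d) ` {a..a+d} \<subseteq> {0..1}" using assms by auto
  have "(W has_real_derivative f' (x+d)) (at (x+d) within {0..1})" using der assms by auto
  hence "(W has_real_derivative f' (x+d)) (at ((\<lambda>x. x + d) x) within ((\<lambda>x. x + d) ` {a..a+d}))"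
    by (rule has_field_derivative_subset[OF _ sub2])
  note WD = this
  have sh: "((\<lambda>x. x + d) has_real_derivative 1) (at x within {a..a+d})"
    by (auto intro!: derivative_eq_intros)
  from DERIV_image_chain[OF WD sh] 
  have "((W \<circ> (\<lambda>x. x + d)) has_real_derivative f' (x+d) * 1) (at x within {a..a+d})" .
  hence A: "((\<lambda>x. W (x + d)) has_real_derivative f' (x+d)) (at x within {a..a+d})"
    by (simp add: o_def)
  have B: "(W has_real_derivative f' x) (at x within {a..a+d})"
    using der assms has_field_derivative_subset[OF _ sub1] by auto
  show ?thesis using DERIV_diff[OF A B] .
qed

lemma key:
  fixes W f' :: "real \<Rightarrow> real"
  assumes der: "\<forall>x\<in>{0..1}. (W has_real_derivative f' x) (at x within {0..1})"
    and x0: "x0 \<in> {0..1}" "strict_antimono_on {0..x0} f'" "strict_mono_on {x0..1} f'"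
    and "0 \<le> a" "a + 3*d \<le> 1" "0 < d"
    and ge: "W (a+2*d) - W (a+d) \<ge> W (a+d) - W a"
  shows "W (a+3*d) - W (a+2*d) > W (a+2*d) - W (a+d)"
proof -
  have A: "f' v < f' u" if "u \<in> {0..x0}" "v \<in> {0..x0}" "u < v" for u v
    using monotone_onD[OF x0(2) that] by simp
  have M: "f' u < f' v" if "u \<in> {x0..1}" "v \<in> {x0..1}" "u < v" for u v
    using monotone_onD[OF x0(3) that] by simp
  let ?D = "\<lambda>x. W (x + d) - W x"
  have "\<exists>y\<in>{a<..<a+d}. ?D (a+d) - ?D a = (a+d-a) * (f' (y+d) - f' y)"
  proof (rule mvt_real)
    fix x assume "x \<in> {a..a+d}"
    thus "(?D has_real_derivative f' (x+d) - f' x) (at x within {a..a+d})"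
      by (intro shift_deriv[OF der]) (use assms in auto)
  qed (use assms in auto)
  then obtain y where y: "y \<in> {a<..<a+d}" "?D (a+d) - ?D a = d * (f' (y+d) - f' y)" by auto
  have e2: "a+2*d = a+d+d" and e3: "a+3*d = a+d+d+d" by simp_all
  have "?D (a+d) - ?D a \<ge> 0" using ge unfolding e2 by simp
  hence dy: "f' (y+d) - f' y \<ge> 0" using y(2) \<open>0 < d\<close> by (metis zero_le_mult_iff not_less) 
  have "\<exists>z\<in>{a+d<..<a+d+d}. ?D (a+d+d) - ?D (a+d) = (a+d+d-(a+d)) * (f' (z+d) - f' z)"
  proof (rule mvt_real)
    fix x assume "x \<in> {a+d..a+d+d}"
    thus "(?D has_real_derivative f' (x+d) - f' x) (at x within {a+d..a+d+d})"
      by (intro shift_deriv[OF der]) (use assms in auto)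
  qed (use assms in auto)
  then obtain z where z: "z \<in> {a+d<..<a+d+d}" "?D (a+d+d) - ?D (a+d) = d * (f' (z+d) - f' z)" by auto
  have yz: "y < z" using y z by auto
  have "f' (z+d) - f' z > 0"
  proof (cases "z \<ge> x0")
    case True
    have "f' z < f' (z+d)" by (rule M) (use True z assms in auto)
    then show ?thesis by simp
  next
    case False
    have "y + d > x0"
    proof (rule ccontr)
      assume "\<not> ?thesis"
      hence "f' (y+d) < f' y" by (intro A) (use y assms in auto)
      thus False using dy by auto
    qed
    have "f' (z+d) > f' (y+d)" by (rule M) (use \<open>y + d > x0\<close> yz z assms in auto)
    moreover have "f' z < f' y" by (rule A) (use False yz y assms in auto)
    ultimately show ?thesis using dy by auto
  qed
  hence "?D (a+d+d) - ?D (a+d) > 0" using z(2) \<open>0<d\<close> by simp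
  thus ?thesis unfolding e2 e3 by simp
qed

lemma prop_up:
  fixes h :: "nat \<Rightarrow> real"
  assumes P: "\<And>j. 1 \<le> j \<Longrightarrow> j+2 \<le> k \<Longrightarrow> h j \<le> h (j+1) \<Longrightarrow> h (j+1) < h (j+2)"
    and "1 \<le> i" "h i \<le> h (i+1)"
  shows "i < m \<Longrightarrow> m+1 \<le> k \<Longrightarrow> h m < h (m+1)"
proof (induction m)
  case 0 then show ?case by simp
next
  case (Suc m)
  show ?case
  proof (cases "i = m")
    case True
    then show ?thesis using P[of i] assms Suc.prems by simp
  next
    case False
    hence "h m < h (m+1)" using Suc by simp
    then show ?thesis using P[of m] assms Suc.prems False by simp
  qed
qed

lemma dec_le:
  fixes h :: "nat \<Rightarrow> real"
  shows "(\<forall>i. 1 \<le> i \<longrightarrow> i < j \<longrightarrow> h (i+1) < h i) \<Longrightarrow> 1 \<le> i \<Longrightarrow> i \<le> j \<Longrightarrow> h j \<le> h i"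
proof (induction j)
  case 0 then show ?case by simp
next
  case (Suc j)
  show ?case
  proof (cases "i = Suc j")
    case True then show ?thesis by simp
  next
    case False
    hence "h j \<le> h i" using Suc by simp
    moreover have "h (j+1) < h j" using Suc.prems False by auto
    ultimately show ?thesis by simp
  qed
qed

lemma comb:
  fixes h :: "nat \<Rightarrow> real"
  assumes P: "\<And>j. 1 \<le> j \<Longrightarrow> j+2 \<le> k \<Longrightarrow> h j \<le> h (j+1) \<Longrightarrow> h (j+1) < h (j+2)"
    and j: "1 \<le> j" "j+2 \<le> k" and C: "(\<Sum>i=1..j. h i) \<le> real j * h (j+1)"
  shows "(\<Sum>i=1..j+1. h i) \<le> real (j+1) * h (j+2)"
proof (cases "h j \<le> h (j+1)")
  case True
  hence lt: "h (j+1) < h (j+2)" using P j by simp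
  have "(\<Sum>i=1..j+1. h i) = (\<Sum>i=1..j. h i) + h (j+1)" by simp
  also have "\<dots> \<le> real (j+1) * h (j+1)" using C by (simp add: algebra_simps)
  also have "\<dots> \<le> real (j+1) * h (j+2)" using lt by (intro mult_left_mono) auto
  finally show ?thesis .
next
  case False
  have dec: "\<forall>i. 1 \<le> i \<longrightarrow> i < j \<longrightarrow> h (i+1) < h i"
  proof (intro allI impI, rule ccontr)
    fix i assume i: "1 \<le> i" "i < j" "\<not> h (i+1) < h i"
    have hi: "h i \<le> h (i+1)" using i(3) by simp
    have "h j < h (j+1)" by (rule prop_up[OF P i(1) hi]) (use i j in auto)
    thus False using False by simp
  qed
  have "(\<Sum>i=1..j. h j) \<le> (\<Sum>i=1..j. h i)"
    by (rule sum_mono) (use dec_le[OF dec] in auto)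
  hence "real j * h j \<le> (\<Sum>i=1..j. h i)" by simp
  moreover have "real j * h (j+1) < real j * h j" using False j by simp
  ultimately show ?thesis using C by simp
qed

theorem lemma5:
  fixes W :: "real \<Rightarrow> real" and N k j :: nat
  assumes "inverse_S_shaped W"
    and "W 0 = 0" and "W 1 = 1"
    and "\<forall>x\<in>{0..1}. W x \<in> {0..1}"
    and "2 \<le> k" and "k \<le> N"
    and "Jk W N k \<le> k - 1"
    and "Jk W N k \<le> j" and "j \<le> k - 1"
  shows "real j * hplus W N (j + 1) k \<ge> (\<Sum>j'=1..j. hplus W N j' k)"
proof -
  obtain f' x0 where der: "\<forall>x\<in>{0..1}. (W has_real_derivative f' x) (at x within {0..1})"
    and x0: "x0 \<in> {0..1}" "strict_antimono_on {0..x0} f'" "strict_mono_on {x0..1} f'"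
    using assms(1) unfolding inverse_S_shaped_def by blast
  define h where "h i = hplus W N i k" for i
  have Npos: "real N > 0" using assms by simp
  have P: "h (i+1) < h (i+2)" if i: "1 \<le> i" "i+2 \<le> k" "h i \<le> h (i+1)" for i
  proof -
    define m where "m = k - i - 2"
    have e1: "k - i + 1 = m + 3" "k - i = m + 2" "k - (i+1) + 1 = m + 2" "k - (i+1) = m + 1"
      "k - (i+2) + 1 = m + 1" "k - (i+2) = m" using i unfolding m_def by auto
    define a where "a = real m / real N"
    define d where "d = 1 / real N"
    have r: "real (m+3) / real N = a + 3*d" "real (m+2) / real N = a + 2*d"
      "real (m+1) / real N = a + d" "real m / real N = a"
      unfolding a_def d_def using Npos by (auto simp: field_simps)
    have hi: "h i = W (a+3*d) - W (a+2*d)" "h (i+1) = W (a+2*d) - W (a+d)" "h (i+2) = W (a+d) - W a"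
      unfolding h_def hplus_def e1 using r by (simp_all add: add.commute)
    have a0: "0 \<le> a" unfolding a_def by simp
    have a1: "a + 3*d \<le> 1"
    proof -
      have "real (m+3) \<le> real N" using i assms(6) unfolding m_def by simp
      hence "real (m+3) / real N \<le> 1" using Npos by simp
      thus ?thesis using r(1) by simp
    qed
    have d0: "0 < d" unfolding d_def using Npos by simp
    show ?thesis
    proof (rule ccontr)
      assume "\<not> ?thesis"
      hence "W (a+2*d) - W (a+d) \<ge> W (a+d) - W a" using hi by simp
      from key[OF der x0 a0 a1 d0 this] show False using hi i(3) by simp
    qed
  qed
  define J where "J = Jk W N k"
  have ex: "k \<in> {1..k} \<and> Jcond W N k k" using assms unfolding Jcond_def by simp
  have LJ: "J \<in> {1..k} \<and> Jcond W N k J"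
    unfolding J_def Jk_def by (rule LeastI[of _ k]) (rule ex)
  have CJ: "(\<Sum>i=1..J. h i) \<le> real J * h (J+1)"
    using LJ assms(5,7) unfolding Jcond_def h_def J_def by auto
  have "(\<Sum>i=1..j. h i) \<le> real j * h (j+1)"
    using assms(8) unfolding J_def[symmetric]
  proof (induction j rule: dec_induct)
    case base then show ?case by (rule CJ)
  next
    case (step n)
    have "(\<Sum>i=1..n+1. h i) \<le> real (n+1) * h (n+2)"
      by (rule comb[of k h n, OF P]) (use step LJ assms(9) in auto)
    then show ?case by simp
  qed
  thus ?thesis unfolding h_def by simp
qed

end
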